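(* Let $p>2$ be a finite integer. For each $n\ge2$ let non-negative numbers ${p_j^n}'$, ${p_j^n}''$ ($j=1,\dots,n$) and $p^n_{OPT}$ be given with $p^n_{OPT}+\sum_{j=1}^n{p_j^n}'+\sum_{j=1}^n{p_j^n}''=1$. Let $f$ be the randomized mechanism which, on a reported profile ${\bf x}=(x_1,\dots,x_n)$, locates the facility at $OPT({\bf x})$ with probability $p^n_{OPT}$, at $x_j$ with probability ${p_j^n}'$, and at $x_{[j]}$ with probability ${p_j^n}''$ (probabilities of coinciding locations add up), where $x_{[j]}$ is the $j$-th largest component of ${\bf x}$ and $OPT({\bf x})$ is the unique minimizer over $y\in\mathbb{R}$ of $\sum_i|x_i-y|^p$. If $f$ is strategyproof, then the approximation ratio of $f$ is at least $2^{1-\frac1p}$.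
   Context: A randomized mechanism maps each profile ${\bf x}\in\mathbb{R}^n$ (for each $n\ge2$) to a probability distribution $\pi$ on $\mathbb{R}$; the facility location $y$ is drawn from $\pi$. Agent $i$ located at $x_i$ has cost $C(x_i,\pi)=\mathbb{E}_{y\sim\pi}|x_i-y|$. The mechanism is strategyproof if for every $n$, every agent $i$, all $x_i,x_i'\in\mathbb{R}$ and all ${\bf x}_{-i}$: $C(x_i,f(x_i,{\bf x}_{-i}))\le C(x_i,f(x_i',{\bf x}_{-i}))$. The social cost is $sc({\bf x},\pi)=\mathbb{E}_{y\sim\pi}\big(\sum_i|x_i-y|^p\big)^{1/p}$, and the approximation ratio of $f$ is $\sup sc({\bf x},f({\bf x}))/\min_{y}sc({\bf x},y)$, the supremum taken over all $n\ge 2$ and all profiles ${\bf x}\in\mathbb{R}^n$ (with $0/0=1$, $c/0=\infty$ for $c>0$). *)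

theory Defs
  imports "HOL-Analysis.Analysis" "HOL-Library.Extended_Real"
begin

text \<open>Profiles of n agents are functions nat => real; only the indices 0..n-1 matter.\<close>

definition lp_obj :: "nat \<Rightarrow> nat \<Rightarrow> (nat \<Rightarrow> real) \<Rightarrow> real \<Rightarrow> real" where
  "lp_obj p n x y = (\<Sum>i<n. \<bar>x i - y\<bar> ^ p)"

definition OPT :: "nat \<Rightarrow> nat \<Rightarrow> (nat \<Rightarrow> real) \<Rightarrow> real" where
  "OPT p n x = (THE y. \<forall>z. lp_obj p n x y \<le> lp_obj p n x z)"

text \<open>x_[j]: the j-th largest component (0-indexed here: j = 0 is the largest).\<close>
definition kth_largest :: "nat \<Rightarrow> (nat \<Rightarrow> real) \<Rightarrow> nat \<Rightarrow> real" where
  "kth_largest n x j = rev (sort (map x [0..<n])) ! j"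

definition mech_exp :: "nat \<Rightarrow> (nat \<Rightarrow> real) \<Rightarrow> (nat \<Rightarrow> nat \<Rightarrow> real) \<Rightarrow> (nat \<Rightarrow> nat \<Rightarrow> real)
    \<Rightarrow> nat \<Rightarrow> (nat \<Rightarrow> real) \<Rightarrow> (real \<Rightarrow> real) \<Rightarrow> real" where
  "mech_exp p pO p1 p2 n x g =
     pO n * g (OPT p n x) + (\<Sum>j<n. p1 n j * g (x j)) + (\<Sum>j<n. p2 n j * g (kth_largest n x j))"

definition strategyproof :: "nat \<Rightarrow> (nat \<Rightarrow> real) \<Rightarrow> (nat \<Rightarrow> nat \<Rightarrow> real) \<Rightarrow> (nat \<Rightarrow> nat \<Rightarrow> real) \<Rightarrow> bool" where
  "strategyproof p pO p1 p2 \<longleftrightarrow>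
     (\<forall>n\<ge>2. \<forall>i<n. \<forall>x v.
        mech_exp p pO p1 p2 n x (\<lambda>y. \<bar>x i - y\<bar>)
          \<le> mech_exp p pO p1 p2 n (x(i := v)) (\<lambda>y. \<bar>x i - y\<bar>))"

definition sc_pt :: "nat \<Rightarrow> nat \<Rightarrow> (nat \<Rightarrow> real) \<Rightarrow> real \<Rightarrow> real" where
  "sc_pt p n x y = root p (lp_obj p n x y)"

definition ratio :: "real \<Rightarrow> real \<Rightarrow> ereal" where
  "ratio a b = (if b = 0 then (if a = 0 then 1 else \<infinity>) else ereal (a / b))"

definition approx_ratio :: "nat \<Rightarrow> (nat \<Rightarrow> real) \<Rightarrow> (nat \<Rightarrow> nat \<Rightarrow> real) \<Rightarrow> (nat \<Rightarrow> nat \<Rightarrow> real) \<Rightarrow> ereal" where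
  "approx_ratio p pO p1 p2 =
     (SUP nx \<in> {(n, x). (n::nat) \<ge> 2}.
        ratio (mech_exp p pO p1 p2 (fst nx) (snd nx) (sc_pt p (fst nx) (snd nx)))
              (INF y. sc_pt p (fst nx) (snd nx) y))"

end

theory Submission
  imports Defs
begin


definition phi :: "nat \<Rightarrow> real \<Rightarrow> real" where "phi p t = t * \<bar>t\<bar>^(p-2)"

lemma deriv_abs_pow:
  assumes p: "2 \<le> p"
  shows "((\<lambda>t. \<bar>t\<bar>^p) has_real_derivative (real p * phi p t)) (at t)"
proof (cases "t = 0")
  case True
  have "((\<lambda>h::real. (\<bar>0 + h\<bar>^p - \<bar>0\<bar>^p) / h) \<longlongrightarrow> 0) (at 0)"
  proof (rule Lim_null_comparison)
    show "\<forall>\<^sub>F h in at 0. norm ((\<bar>0 + h\<bar>^p - \<bar>0\<bar>^p) / h) \<le> \<bar>h\<bar>^(p-1)"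
    proof (rule always_eventually, intro allI)
      fix h :: real
      have "p = Suc (p - 1)" using p by arith
      then have "\<bar>h\<bar>^p = \<bar>h\<bar> * \<bar>h\<bar>^(p-1)" by (metis power_Suc)
      then show "norm ((\<bar>0 + h\<bar>^p - \<bar>0\<bar>^p) / h) \<le> \<bar>h\<bar>^(p-1)" using p
        by (cases "h = 0") (auto simp: abs_mult power_abs zero_power)
    qed
    have "((\<lambda>h::real. \<bar>h\<bar>^(p-1)) \<longlongrightarrow> \<bar>0\<bar>^(p-1)) (at 0)"
      by (intro tendsto_intros)
    moreover have z: "(0::real)^(p-1) = 0" using p by (simp add: zero_power)
    ultimately show "((\<lambda>h::real. \<bar>h\<bar>^(p-1)) \<longlongrightarrow> 0) (at 0)" unfolding abs_zero z by blast
  qed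
  then show ?thesis using True p by (simp add: DERIV_def phi_def)
next
  case False
  show ?thesis
  proof (cases "t > 0")
    case True
    have d: "((\<lambda>t. t^p) has_real_derivative (real p * t^(p-1))) (at t)"
      using DERIV_pow[of p t] by simp
    have e: "real p * t^(p-1) = real p * phi p t" using p True
    proof -
      have "p - 1 = Suc (p - 2)" using p by arith
      then show ?thesis using True by (simp add: phi_def)
    qed
    show ?thesis
      by (rule has_field_derivative_transform_within_open[OF d[unfolded e], of "{0<..}"]) (use True in auto)
  next
    case False
    then have tn: "t < 0" using \<open>t \<noteq> 0\<close> by auto
    have d: "((\<lambda>t. (-t)^p) has_real_derivative (real p * (-t)^(p-1) * (-1))) (at t)"
      by (rule derivative_eq_intros refl | simp)+
    have e: "real p * (-t)^(p-1) * (-1) = real p * phi p t" using p tn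
    proof -
      have "p - 1 = Suc (p - 2)" using p by arith
      then have "(-t)^(p-1) = (-t) * (-t)^(p-2)" by simp
      then show ?thesis using tn by (simp add: phi_def)
    qed
    show ?thesis
      by (rule has_field_derivative_transform_within_open[OF d[unfolded e], of "{..<0}"]) (use tn in auto)
  qed
qed
lemma phi_nonneg_eq: "2 \<le> p \<Longrightarrow> 0 \<le> t \<Longrightarrow> phi p t = t^(p-1)"
proof -
  assume p: "2 \<le> p" and t: "0 \<le> t"
  have "p - 1 = Suc (p - 2)" using p by arith
  then show ?thesis using t by (simp add: phi_def)
qed

lemma phi_nonpos_eq: "2 \<le> p \<Longrightarrow> t \<le> 0 \<Longrightarrow> phi p t = - ((-t)^(p-1))"
proof -
  assume p: "2 \<le> p" and t: "t \<le> 0"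
  have "p - 1 = Suc (p - 2)" using p by arith
  then show ?thesis using t by (simp add: phi_def)
qed

lemma phi_strict_mono: assumes p: "2 \<le> p" and st: "s < t" shows "phi p s < phi p t"
proof -
  have q: "p - 1 \<noteq> 0" using p by arith
  show ?thesis
  proof (cases "0 \<le> s")
    case True
    then show ?thesis using phi_nonneg_eq[OF p True] phi_nonneg_eq[OF p, of t] st q
      by (simp add: power_strict_mono)
  next
    case False
    show ?thesis
    proof (cases "0 \<le> t")
      case True
      have "phi p s < 0" using phi_nonpos_eq[OF p, of s] False q by simp
      moreover have "phi p t \<ge> 0" using phi_nonneg_eq[OF p True] True by simp
      ultimately show ?thesis by simp
    next
      case f2: False
      have "(-t)^(p-1) < (-s)^(p-1)" using st f2 q by (intro power_strict_mono) auto
      then show ?thesis using phi_nonpos_eq[OF p, of s] phi_nonpos_eq[OF p, of t] False f2 by simp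
    qed
  qed
qed

lemma phi_mono: "2 \<le> p \<Longrightarrow> s \<le> t \<Longrightarrow> phi p s \<le> phi p t"
  using phi_strict_mono[of p s t] by (cases "s = t") auto

lemma phi_zero[simp]: "2 \<le> p \<Longrightarrow> phi p 0 = 0"
  by (simp add: phi_def)

lemma phi_odd: "phi p (-t) = - phi p t"
  by (simp add: phi_def)

lemma continuous_phi: "continuous_on S (phi p)"
  unfolding phi_def by (intro continuous_intros)

definition DD :: "nat \<Rightarrow> nat \<Rightarrow> (nat \<Rightarrow> real) \<Rightarrow> real \<Rightarrow> real" where
  "DD p n x y = (\<Sum>i<n. phi p (y - x i))"

lemma lp_deriv:
  assumes p: "2 \<le> p"
  shows "(lp_obj p n x has_real_derivative (real p * DD p n x y)) (at y)"
proof -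
  have each: "((\<lambda>y. \<bar>x i - y\<bar>^p) has_real_derivative (real p * phi p (y - x i))) (at y)" for i
  proof -
    have "((\<lambda>y. \<bar>y - x i\<bar>^p) has_real_derivative (real p * phi p (y - x i)) * 1) (at y)"
      by (rule DERIV_chain2[OF deriv_abs_pow[OF p]]) (rule derivative_eq_intros refl | simp)+
    then show ?thesis by (simp add: abs_minus_commute)
  qed
  have "((\<lambda>y. \<Sum>i<n. \<bar>x i - y\<bar>^p) has_real_derivative (\<Sum>i<n. real p * phi p (y - x i))) (at y)"
    by (rule DERIV_sum) (rule each)
  then show ?thesis
    by (simp add: lp_obj_def[abs_def] DD_def sum_distrib_left)
qed

lemma DD_mono: "2 \<le> p \<Longrightarrow> y \<le> z \<Longrightarrow> DD p n x y \<le> DD p n x z"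
  unfolding DD_def by (intro sum_mono phi_mono) auto

lemma DD_strict: "2 \<le> p \<Longrightarrow> 0 < n \<Longrightarrow> y < z \<Longrightarrow> DD p n x y < DD p n x z"
  unfolding DD_def by (intro sum_strict_mono phi_strict_mono) auto

lemma lp_strict:
  assumes p: "2 \<le> p" and n: "0 < n" and r: "DD p n x y0 = 0" and z: "z \<noteq> y0"
  shows "lp_obj p n x y0 < lp_obj p n x z"
proof (cases "y0 < z")
  case True
  obtain \<xi> where xi: "y0 < \<xi>" "\<xi> < z"
    "lp_obj p n x z - lp_obj p n x y0 = (z - y0) * (real p * DD p n x \<xi>)"
    using MVT2[OF True, of "lp_obj p n x" "\<lambda>y. real p * DD p n x y"] lp_deriv[OF p] by blast
  have "DD p n x \<xi> > 0" using DD_strict[OF p n xi(1), where x=x] r by simp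
  moreover have "real p > 0" using p by simp
  ultimately have "(z - y0) * (real p * DD p n x \<xi>) > 0" using True by simp
  then show ?thesis using xi(3) by simp
next
  case False
  then have zl: "z < y0" using z by simp
  obtain \<xi> where xi: "z < \<xi>" "\<xi> < y0"
    "lp_obj p n x y0 - lp_obj p n x z = (y0 - z) * (real p * DD p n x \<xi>)"
    using MVT2[OF zl, of "lp_obj p n x" "\<lambda>y. real p * DD p n x y"] lp_deriv[OF p] by blast
  have "DD p n x \<xi> < 0" using DD_strict[OF p n xi(2), where x=x] r by simp
  moreover have "real p > 0" using p by simp
  ultimately have "(y0 - z) * (real p * DD p n x \<xi>) < 0" using zl by (simp add: mult_pos_neg)
  then show ?thesis using xi(3) by simp
qed

lemma DD_root:
  assumes p: "2 \<le> p" and n: "0 < n"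
  shows "\<exists>y. DD p n x y = 0"
proof -
  define a where "a = Min (x ` {..<n})"
  define b where "b = Max (x ` {..<n})"
  have ne: "x ` {..<n} \<noteq> {}" using n by auto
  have a: "a \<le> x i" if "i < n" for i unfolding a_def using that by (intro Min_le) auto
  have b: "x i \<le> b" if "i < n" for i unfolding b_def using that by (intro Max_ge) auto
  have ab: "a \<le> b" using a[OF n] b[OF n] by simp
  have "DD p n x a \<le> 0" unfolding DD_def
    by (rule sum_nonpos) (use phi_mono[OF p, of "a - x _" 0] a p in auto)
  moreover have "DD p n x b \<ge> 0" unfolding DD_def
    by (rule sum_nonneg) (use phi_mono[OF p, of 0 "b - x _"] b p in auto)
  moreover have "continuous_on {a..b} (DD p n x)"
    unfolding DD_def[abs_def]
    by (intro continuous_intros continuous_on_compose2[OF continuous_phi[of UNIV p]]) auto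
  ultimately show ?thesis using IVT'[of "DD p n x" a 0 b] ab by blast
qed

lemma OPT_eq:
  assumes p: "2 \<le> p" and n: "0 < n" and r: "DD p n x y0 = 0"
  shows "OPT p n x = y0"
  unfolding OPT_def
proof (rule the_equality)
  show "\<forall>z. lp_obj p n x y0 \<le> lp_obj p n x z"
    using lp_strict[OF p n r] by (metis order.order_iff_strict)
  fix y assume "\<forall>z. lp_obj p n x y \<le> lp_obj p n x z"
  then have "lp_obj p n x y \<le> lp_obj p n x y0" by blast
  then show "y = y0" using lp_strict[OF p n r, of y] by (meson leD)
qed

lemma OPT_min:
  assumes p: "2 \<le> p" and n: "0 < n"
  shows "lp_obj p n x (OPT p n x) \<le> lp_obj p n x z"
proof -
  obtain y0 where r: "DD p n x y0 = 0" using DD_root[OF p n] by blast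
  show ?thesis using OPT_eq[OF p n r] lp_strict[OF p n r, of z] by (cases "z = y0") auto
qed

lemma OPT_less:
  assumes p: "2 \<le> p" and n: "0 < n" and s: "DD p n x s > 0"
  shows "OPT p n x < s"
proof -
  obtain y0 where r: "DD p n x y0 = 0" using DD_root[OF p n] by blast
  have "\<not> s \<le> y0" using DD_mono[OF p, of s y0 n x] r s by force
  then show ?thesis using OPT_eq[OF p n r] by simp
qed

lemma OPT_greater:
  assumes p: "2 \<le> p" and n: "0 < n" and s: "DD p n x s < 0"
  shows "s < OPT p n x"
proof -
  obtain y0 where r: "DD p n x y0 = 0" using DD_root[OF p n] by blast
  have "\<not> y0 \<le> s" using DD_mono[OF p, of y0 s n x] r s by force
  then show ?thesis using OPT_eq[OF p n r] by simp
qed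



definition sig :: "nat \<Rightarrow> nat \<Rightarrow> nat \<Rightarrow> nat" where
  "sig i pos j = (if j = i then pos else if j = pos then i else j)"

definition prof :: "real list \<Rightarrow> nat \<Rightarrow> nat \<Rightarrow> nat \<Rightarrow> real" where
  "prof A i pos j = A ! sig i pos j"

lemma sig_inv: "sig i pos (sig i pos j) = j"
  unfolding sig_def by auto

lemma sig_lt: "i < n \<Longrightarrow> pos < n \<Longrightarrow> j < n \<Longrightarrow> sig i pos j < n"
  unfolding sig_def by auto

lemma sum_prof:
  assumes "length A = n" "i < n" "pos < n"
  shows "(\<Sum>j<n. f (prof A i pos j)) = sum_list (map f A)"
proof -
  have "(\<Sum>j<n. f (A ! sig i pos j)) = (\<Sum>j<n. f (A ! j))"
    by (rule sum.reindex_bij_witness[where i="sig i pos" and j="sig i pos"])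
       (use assms in \<open>auto simp: sig_inv sig_lt\<close>)
  also have "\<dots> = sum_list (map f A)"
    using assms(1) by (simp add: sum_list_sum_nth atLeast0LessThan)
  finally show ?thesis by (simp add: prof_def)
qed

lemma mset_prof:
  assumes "length A = n" "i < n" "pos < n"
  shows "mset (map (prof A i pos) [0..<n]) = mset A"
proof -
  have inj: "inj_on (sig i pos) {0..<n}"
    by (metis inj_onI sig_inv)
  have im: "sig i pos ` {0..<n} = {0..<n}"
  proof
    show "sig i pos ` {0..<n} \<subseteq> {0..<n}" using assms sig_lt by auto
    show "{0..<n} \<subseteq> sig i pos ` {0..<n}"
    proof
      fix j assume "j \<in> {0..<n}"
      then show "j \<in> sig i pos ` {0..<n}"
        using sig_inv[of i pos j] sig_lt[of i n pos j] assms by (metis atLeastLessThan_iff image_eqI zero_le)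
    qed
  qed
  have "mset (map (prof A i pos) [0..<n]) = image_mset ((\<lambda>j. A ! j) \<circ> sig i pos) (mset_set {0..<n})"
    by (simp add: prof_def[abs_def] o_def)
  also have "\<dots> = image_mset (\<lambda>j. A ! j) (image_mset (sig i pos) (mset_set {0..<n}))"
    by (simp add: multiset.map_comp)
  also have "\<dots> = image_mset (\<lambda>j. A ! j) (mset_set {0..<n})"
    using image_mset_mset_set[OF inj] im by simp
  also have "\<dots> = mset (map (\<lambda>j. A ! j) [0..<n])" by simp
  also have "\<dots> = mset A" using map_nth[of A] assms(1) by simp
  finally show ?thesis .
qed

lemma kth_prof:
  assumes "length A = n" "i < n" "pos < n" "sorted A"
  shows "kth_largest n (prof A i pos) j = rev A ! j"
proof -
  have "sort (map (prof A i pos) [0..<n]) = A"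
    by (rule properties_for_sort) (use mset_prof[OF assms(1-3)] assms(4) in auto)
  then show ?thesis by (simp add: kth_largest_def)
qed

lemma prof_upd:
  assumes "pos < length A"
  shows "(prof A i pos)(i := c) = prof (A[pos := c]) i pos"
proof
  fix j show "((prof A i pos)(i := c)) j = prof (A[pos := c]) i pos j"
    using assms by (auto simp: prof_def sig_def)
qed

lemma prof_i: "pos < length A \<Longrightarrow> prof A i pos i = A ! pos"
  by (simp add: prof_def sig_def)

lemma sum_upd_fun:
  fixes n i :: nat and w :: "nat \<Rightarrow> real" and f :: "real \<Rightarrow> real"
  assumes "i < n"
  shows "(\<Sum>j<n. w j * f ((x(i := v)) j)) = (\<Sum>j<n. w j * f (x j)) + w i * (f v - f (x i))"
proof -
  have "(\<Sum>j<n. w j * f ((x(i := v)) j)) = w i * f v + (\<Sum>j\<in>{..<n}-{i}. w j * f ((x(i := v)) j))"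
    using assms sum.remove[of "{..<n}" i "\<lambda>j. w j * f ((x(i := v)) j)"] by simp
  also have "(\<Sum>j\<in>{..<n}-{i}. w j * f ((x(i := v)) j)) = (\<Sum>j\<in>{..<n}-{i}. w j * f (x j))"
    by (intro sum.cong) auto
  finally have 1: "(\<Sum>j<n. w j * f ((x(i := v)) j)) = w i * f v + (\<Sum>j\<in>{..<n}-{i}. w j * f (x j))" .
  have "(\<Sum>j<n. w j * f (x j)) = w i * f (x i) + (\<Sum>j\<in>{..<n}-{i}. w j * f (x j))"
    using assms sum.remove[of "{..<n}" i "\<lambda>j. w j * f (x j)"] by simp
  with 1
  show ?thesis by (simp add: algebra_simps)
qed

lemma sum_upd_list:
  fixes n r :: nat and w :: "nat \<Rightarrow> real" and f :: "real \<Rightarrow> real"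
  assumes "r < n" "length L = n"
  shows "(\<Sum>j<n. w j * f (L[r := v] ! j)) = (\<Sum>j<n. w j * f (L ! j)) + w r * (f v - f (L ! r))"
proof -
  have "(\<Sum>j<n. w j * f (L[r := v] ! j)) = (\<Sum>j<n. w j * f ((fun_upd (\<lambda>j. L ! j) r v) j))"
    using assms by (intro sum.cong) auto
  then show ?thesis using sum_upd_fun[OF assms(1), of w f "\<lambda>j. L ! j" v] by simp
qed

lemma pow_diff_lower:
  fixes a b :: real
  assumes "0 \<le> a" "a \<le> b"
  shows "real q * a^(q-1) * (b - a) \<le> b^q - a^q"
proof (cases q)
  case 0 then show ?thesis by simp
next
  case (Suc l)
  have "b^(Suc l) - a^(Suc l) = (b - a) * (\<Sum>j<Suc l. b^j * a^(l - j))"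
    by (rule diff_power_eq_sum)
  moreover have "(\<Sum>j<Suc l. a^l) \<le> (\<Sum>j<Suc l. b^j * a^(l - j))"
  proof (rule sum_mono)
    fix j assume "j \<in> {..<Suc l}"
    then have "a^l = a^j * a^(l-j)" by (simp add: power_add[symmetric])
    also have "\<dots> \<le> b^j * a^(l-j)" using assms by (intro mult_right_mono power_mono) auto
    finally show "a^l \<le> b^j * a^(l-j)" .
  qed
  ultimately show ?thesis using Suc assms
    by (simp add: mult.commute mult.left_commute mult_left_mono)
qed

lemma pow_diff_upper:
  fixes a b :: real
  assumes "0 \<le> a" "a \<le> b"
  shows "b^q - a^q \<le> real q * b^(q-1) * (b - a)"
proof (cases q)
  case 0 then show ?thesis by simp
next
  case (Suc l)
  have "b^(Suc l) - a^(Suc l) = (b - a) * (\<Sum>j<Suc l. b^j * a^(l - j))"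
    by (rule diff_power_eq_sum)
  moreover have "(\<Sum>j<Suc l. b^j * a^(l - j)) \<le> (\<Sum>j<Suc l. b^l)"
  proof (rule sum_mono)
    fix j assume "j \<in> {..<Suc l}"
    then have "b^l = b^j * b^(l-j)" by (simp add: power_add[symmetric])
    moreover have "b^j * a^(l-j) \<le> b^j * b^(l-j)" using assms by (intro mult_left_mono power_mono) auto
    ultimately show "b^j * a^(l-j) \<le> b^l" by simp
  qed
  ultimately show ?thesis using Suc assms
    by (simp add: mult.commute mult.left_commute mult_left_mono)
qed



definition LA :: "nat \<Rightarrow> nat \<Rightarrow> real \<Rightarrow> real list" where
  "LA m k c = replicate m (-2) @ [c] @ replicate k 0 @ [1] @ replicate m 2"

lemma LA_len[simp]: "length (LA m k c) = 2*m+k+2"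
  by (simp add: LA_def)

lemma LA_nth[simp]: "LA m k c ! m = c"
  by (simp add: LA_def nth_append)

lemma LA_upd: "(LA m k c)[m := d] = LA m k d"
  by (simp add: LA_def list_update_append)

lemma LA_sorted: "-2 \<le> c \<Longrightarrow> c \<le> 0 \<Longrightarrow> sorted (LA m k c)"
  by (auto simp: LA_def sorted_append)

lemma LA_rev_upd: "rev (LA m k d) = (rev (LA m k c))[m+1+k := d]"
proof -
  have "rev (LA m k d) = rev ((LA m k c)[m := d])" by (simp add: LA_upd)
  also have "\<dots> = (rev (LA m k c))[length (LA m k c) - m - 1 := d]"
    by (rule rev_update) simp
  also have "length (LA m k c) - m - 1 = m+1+k" by simp
  finally show ?thesis .
qed

lemma LA_rev_nth: "rev (LA m k c) ! (m+1+k) = c"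
proof -
  have "rev (LA m k c) = replicate m 2 @ [1] @ replicate k 0 @ [c] @ replicate m (-2)"
    by (simp add: LA_def)
  then show ?thesis by (simp add: nth_append)
qed

lemma LA_sum: "sum_list (map f (LA m k c)) = real m * f (-2) + f c + real k * f 0 + f 1 + real m * f 2"
  by (simp add: LA_def sum_list_replicate)

lemma key_ineq:
  fixes q m k :: nat and h th g :: real
  assumes q: "2 \<le> q"
    and h: "h = 1 / (2 * (real k + 1))"
    and th: "th = 1 / (4 * 3^(q-1) * (real m + 1))"
    and g: "g = th * h"
  shows "real m * (2-g)^q + (1+h-g)^q - real k * g^q - (1+g)^q - real m * (2+g)^q > 0"
proof -
  define T :: real where "T = 3^(q-1)"
  have T3: "T \<ge> 3" unfolding T_def using q power_increasing[of 1 "q-1" "3::real"] by simp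
  have hpos: "0 < h" using h by simp
  have hle: "h \<le> 1/2"
  proof -
    have e: "h * (2 * (real k + 1)) = 1" using h by simp
    have "h * 2 \<le> h * (2 * (real k + 1))" using hpos by (intro mult_left_mono) auto
    then show ?thesis using e by simp
  qed
  have Xpos: "0 < 4 * T * (real m + 1)" using T3 by (intro mult_pos_pos) auto
  have th': "th = 1 / (4 * T * (real m + 1))" using th unfolding T_def by simp
  have thpos: "0 < th" using th' Xpos T3 by simp
  have thle: "th \<le> 1/12"
  proof -
    have "0 \<le> T * real m" using T3 by simp
    moreover have "4 * T * (real m + 1) = 4 * T + 4 * (T * real m)" by (simp add: algebra_simps)
    ultimately have "12 \<le> 4 * T * (real m + 1)" using T3 by linarith
    then have "th * 12 \<le> th * (4 * T * (real m + 1))" using thpos by (intro mult_left_mono) auto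
    moreover have "th * (4 * T * (real m + 1)) = 1" using th' Xpos T3 by simp
    ultimately show ?thesis by simp
  qed
  have thT: "th * T * (real m + 1) = 1/4" using th' Xpos T3 by (simp add: field_simps)
  have gpos: "0 < g" using g thpos hpos by simp
  have gle: "g \<le> h / 12" using g thle hpos by (simp add: mult_right_mono mult.commute)
  have A: "(1+h-g)^q - (1+g)^q \<ge> real q * (h - 2*g)"
  proof -
    have "real q * (1+g)^(q-1) * ((1+h-g) - (1+g)) \<le> (1+h-g)^q - (1+g)^q"
      by (rule pow_diff_lower) (use gpos gle hpos in auto)
    moreover have "real q * (h - 2*g) \<le> real q * (1+g)^(q-1) * ((1+h-g) - (1+g))"
    proof -
      have "1 \<le> (1+g)^(q-1)" using gpos by simp
      moreover have "0 \<le> h - 2*g" using gle hpos by simp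
      ultimately have "(h - 2*g) \<le> (1+g)^(q-1) * (h - 2*g)"
        by (metis mult_le_cancel_right1 order.strict_iff_not)
      then have "real q * (h - 2*g) \<le> real q * ((1+g)^(q-1) * (h - 2*g))"
        by (rule mult_left_mono) simp
      moreover have "(1+h-g) - (1+g) = h - 2*g" by simp
      ultimately show ?thesis by (simp only: mult.assoc)
    qed
    ultimately show ?thesis by linarith
  qed
  have B: "(2+g)^q - (2-g)^q \<le> real q * T * (2*g)"
  proof -
    have "(2+g)^q - (2-g)^q \<le> real q * (2+g)^(q-1) * ((2+g) - (2-g))"
      by (rule pow_diff_upper) (use gpos gle hle in auto)
    moreover have "(2+g)^(q-1) \<le> T" unfolding T_def using gle hle gpos
      by (intro power_mono) auto
    ultimately show ?thesis using gpos
      by (smt (verit, best) mult_right_mono of_nat_0_le_iff mult_left_mono)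
  qed
  have C: "real k * g^q \<le> h / 2"
  proof -
    have "g^q \<le> g^2" using q gpos gle hle by (intro power_decreasing) auto
    also have "\<dots> \<le> h^2" using gpos gle hpos by (intro power_mono) auto
    finally have "real k * g^q \<le> real k * h^2" by (simp add: mult_left_mono)
    also have "real k * h^2 = (real k * h) * h" by (simp add: power2_eq_square)
    also have "real k * h \<le> 1/2"
    proof -
      have e: "h * (2 * (real k + 1)) = 1" using h by simp
      then show ?thesis using hpos by (simp add: algebra_simps)
    qed
    then have "(real k * h) * h \<le> h / 2" using hpos by (simp add: mult_right_mono)
    finally show ?thesis .
  qed
  have D1: "real m * (real q * T * (2*g)) \<le> real q * h / 2"
  proof -
    have e1: "real m * (real q * T * (2*g)) = (real q * h) * (2 * (th * T * real m))"
      using g by (simp add: algebra_simps)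
    have "th * T * real m \<le> th * T * (real m + 1)"
      using thpos T3 by (intro mult_left_mono) auto
    then have "2 * (th * T * real m) \<le> 1/2" using thT by simp
    moreover have "0 \<le> real q * h" using hpos by simp
    ultimately have "(real q * h) * (2 * (th * T * real m)) \<le> (real q * h) * (1/2)"
      by (intro mult_left_mono)
    then show ?thesis using e1 by linarith
  qed
  have D2: "real q * (2*g) \<le> real q * h / 6"
  proof -
    have "real q * (12*g) \<le> real q * h" using gle by (intro mult_left_mono) auto
    then show ?thesis by linarith
  qed
  have "real m * ((2+g)^q - (2-g)^q) \<le> real m * (real q * T * (2*g))"
    using B by (simp add: mult_left_mono)
  moreover have "real q * h / 3 - h / 2 > 0"
  proof -
    have "real q * h \<ge> 2 * h" using q hpos by (simp add: mult_right_mono)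
    then show ?thesis using hpos by simp
  qed
  ultimately show ?thesis using A C D1 D2 by (simp add: algebra_simps)
qed



lemma key:
  fixes pO :: "nat \<Rightarrow> real" and p1 p2 :: "nat \<Rightarrow> nat \<Rightarrow> real"
  assumes p: "2 < p" and SP: "strategyproof p pO p1 p2" and pO0: "0 \<le> pO n"
    and n: "n = 2*m+k+2" and i: "i < n"
  shows "pO n * (1 / (4 * 3^(p-2) * (real m + 1))) \<le> p1 n i + p2 n (m+1+k)"
proof -
  have p2: "2 \<le> p" using p by simp
  define q where "q = p - 1"
  have q2: "2 \<le> q" using p q_def by simp
  have pq: "p - 2 = q - 1" using q_def by simp
  define h :: real where "h = 1 / (2 * (real k + 1))"
  define th :: real where "th = 1 / (4 * 3^(q-1) * (real m + 1))"
  define g where "g = th * h"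
  have hpos: "0 < h" by (simp add: h_def)
  have hlt: "h < 1"
  proof -
    have e: "h * (2 * (real k + 1)) = 1" by (simp add: h_def)
    have "h * 2 \<le> h * (2 * (real k + 1))" using hpos by (intro mult_left_mono) auto
    then show ?thesis using e by simp
  qed
  have thpos: "0 < th" unfolding th_def by simp
  have gpos: "0 < g" unfolding g_def using thpos hpos by simp
  define v where "v = -1 - h"
  define r where "r = m+1+k"
  have rn: "r < n" unfolding r_def n by simp
  define x where "x = prof (LA m k (-1)) i m"
  define x' where "x' = prof (LA m k v) i m"
  have mn: "m < n" using n by simp
  have len: "length (LA m k c) = n" for c using n by simp
  have np: "0 < n" using n by simp
  have xi: "x i = -1" unfolding x_def using prof_i[of m "LA m k (-1)" i] mn len by simp
  have xv: "x(i := v) = x'" unfolding x_def x'_def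
    using prof_upd[of m "LA m k (-1)" i v] LA_upd[of m k "-1" v] mn len by simp
  have sumx: "(\<Sum>j<n. f (x j)) = sum_list (map f (LA m k (-1)))" for f
    unfolding x_def by (rule sum_prof) (use len mn i in auto)
  have sumx': "(\<Sum>j<n. f (x' j)) = sum_list (map f (LA m k v))" for f
    unfolding x'_def by (rule sum_prof) (use len mn i in auto)
  have DD0: "DD p n x 0 = 0"
    unfolding DD_def using sumx[of "\<lambda>a. phi p (0 - a)"] p2 by (simp add: LA_sum phi_odd)
  have O: "OPT p n x = 0" by (rule OPT_eq[OF p2 np DD0])
  have Dx': "DD p n x' y = real m * phi p (y + 2) + phi p (y - v) + real k * phi p y
      + phi p (y - 1) + real m * phi p (y - 2)" for y
    unfolding DD_def using sumx'[of "\<lambda>a. phi p (y - a)"] by (simp add: LA_sum)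
  have Dm1: "DD p n x' (-1) < 0"
  proof -
    have "DD p n x' (-1) = real m * phi p 1 + phi p h + real k * phi p (-1) + phi p (-2) + real m * phi p (-3)"
      using Dx'[of "-1"] by (simp add: v_def)
    also have "\<dots> = real m + h^q - real k - 2^q - real m * 3^q"
      using phi_nonneg_eq[OF p2, of 1] phi_nonneg_eq[OF p2, of h] hpos
        phi_nonpos_eq[OF p2, of "-1"] phi_nonpos_eq[OF p2, of "-2"] phi_nonpos_eq[OF p2, of "-3"]
      by (simp add: q_def)
    also have "\<dots> < 0"
    proof -
      have "h^q < 1" using hpos hlt q2 by (simp add: power_less_one_iff)
      moreover have "(1::real) \<le> 2^q" by simp
      moreover have "real m \<le> real m * 3^q" using mult_left_mono[of 1 "(3::real)^q" "real m"] by simp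
      moreover have "0 \<le> real k" by simp
      ultimately show ?thesis by linarith
    qed
    finally show ?thesis .
  qed
  have Dg: "DD p n x' (-g) > 0"
  proof -
    have gle: "g \<le> 1"
    proof -
      have "1 * 1 \<le> (3::real)^(q-1) * (real m + 1)" by (rule mult_mono) auto
      then have "1 \<le> 4 * (3::real)^(q-1) * (real m + 1)" by linarith
      then have "th \<le> 1" unfolding th_def by simp
      then show ?thesis unfolding g_def using hlt thpos hpos
        by (metis less_eq_real_def mult_le_one)
    qed
    have e1: "phi p (-g + 2) = (2-g)^q" using phi_nonneg_eq[OF p2, of "-g+2"] gle by (simp add: q_def)
    have vv: "-g - v = 1+h-g" by (simp add: v_def)
    have e2: "phi p (-g - v) = (1+h-g)^q" unfolding vv using phi_nonneg_eq[OF p2, of "1+h-g"] gle hpos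
      by (simp add: q_def)
    have e3: "phi p (-g) = - (g^q)" using phi_nonpos_eq[OF p2, of "-g"] gpos by (simp add: q_def)
    have e4: "phi p (-g - 1) = - ((1+g)^q)" using phi_nonpos_eq[OF p2, of "-g-1"] gpos
      by (simp add: q_def add.commute)
    have e5: "phi p (-g - 2) = - ((2+g)^q)" using phi_nonpos_eq[OF p2, of "-g-2"] gpos
      by (simp add: q_def add.commute)
    have "DD p n x' (-g) = real m * (2-g)^q + (1+h-g)^q - real k * g^q - (1+g)^q - real m * (2+g)^q"
      using Dx'[of "-g"] unfolding e1 e2 e3 e4 e5 by simp
    also have "\<dots> > 0"
      by (rule key_ineq[OF q2 h_def th_def g_def])
    finally show ?thesis .
  qed
  define O' where "O' = OPT p n x'"
  have O'1: "-1 < O'" unfolding O'_def by (rule OPT_greater[OF p2 np Dm1])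
  have O'2: "O' < -g" unfolding O'_def by (rule OPT_less[OF p2 np Dg])
  have sorted1: "sorted (LA m k (-1))" by (rule LA_sorted) auto
  have sorted2: "sorted (LA m k v)" by (rule LA_sorted) (use hlt hpos in \<open>auto simp: v_def\<close>)
  have kth1: "kth_largest n x j = rev (LA m k (-1)) ! j" for j
    unfolding x_def by (rule kth_prof) (use len mn i sorted1 in auto)
  have kth2: "kth_largest n x' j = (rev (LA m k (-1)))[r := v] ! j" for j
    unfolding x'_def using kth_prof[of "LA m k v" n i m j] len mn i sorted2 LA_rev_upd[of m k v "-1"]
    by (simp add: r_def)
  have SPi: "mech_exp p pO p1 p2 n x (\<lambda>y. \<bar>x i - y\<bar>) \<le> mech_exp p pO p1 p2 n (x(i := v)) (\<lambda>y. \<bar>x i - y\<bar>)"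
    using SP i n unfolding strategyproof_def by auto
  define L where "L = rev (LA m k (-1))"
  have Lr: "L ! r = -1" unfolding L_def r_def by (rule LA_rev_nth)
  have lenL: "length L = n" unfolding L_def using len by simp
  have S1: "(\<Sum>j<n. p1 n j * \<bar>-1 - x' j\<bar>) = (\<Sum>j<n. p1 n j * \<bar>-1 - x j\<bar>) + p1 n i * h"
  proof -
    have "(\<Sum>j<n. p1 n j * \<bar>-1 - (x(i := v)) j\<bar>) = (\<Sum>j<n. p1 n j * \<bar>-1 - x j\<bar>) + p1 n i * (\<bar>-1 - v\<bar> - \<bar>-1 - x i\<bar>)"
      by (rule sum_upd_fun[OF i])
    then show ?thesis unfolding xv xi using hpos by (simp add: v_def)
  qed
  have S2: "(\<Sum>j<n. p2 n j * \<bar>-1 - L[r := v] ! j\<bar>) = (\<Sum>j<n. p2 n j * \<bar>-1 - L ! j\<bar>) + p2 n r * h"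
    using sum_upd_list[OF rn lenL, of "p2 n" "\<lambda>y. \<bar>-1 - y\<bar>" v] Lr hpos by (simp add: v_def)
  have abs1: "\<bar>-1 - O'\<bar> = 1 + O'" using O'1 by simp
  have main: "pO n \<le> pO n * (1 + O') + (p1 n i + p2 n r) * h"
    using SPi unfolding mech_exp_def xv xi O O'_def[symmetric] kth1 kth2 L_def[symmetric]
    using S1 S2 abs1 by (simp add: algebra_simps)
  have "pO n * g \<le> pO n * (- O')" using O'2 pO0 by (intro mult_left_mono) auto
  then have "pO n * th * h \<le> (p1 n i + p2 n r) * h" using main by (simp add: g_def algebra_simps)
  then have "pO n * th \<le> p1 n i + p2 n r" using hpos by simp
  then show ?thesis unfolding th_def pq r_def by simp
qed



lemma pO_bound:
  fixes pO :: "nat \<Rightarrow> real" and p1 p2 :: "nat \<Rightarrow> nat \<Rightarrow> real"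
  assumes p: "2 < p" and SP: "strategyproof p pO p1 p2" and n2: "2 \<le> n"
    and pO0: "0 \<le> pO n"
    and p10: "\<And>j. j < n \<Longrightarrow> p1 n j \<ge> 0"
    and p20: "\<And>j. j < n \<Longrightarrow> p2 n j \<ge> 0"
    and s1: "pO n + (\<Sum>j<n. p1 n j) + (\<Sum>j<n. p2 n j) = 1"
  shows "pO n * (1 / (4 * 3^(p-2))) * harm (Suc ((n-2) div 2)) \<le> 2"
proof -
  define M where "M = (n-2) div 2"
  define ka :: real where "ka = 1 / (4 * 3^(p-2))"
  have P1: "(\<Sum>j<n. p1 n j) \<le> 1" and P2: "(\<Sum>j<n. p2 n j) \<le> 1"
    using s1 pO0 sum_nonneg[of "{..<n}" "p1 n"] sum_nonneg[of "{..<n}" "p2 n"] p10 p20 by auto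
  obtain i0 where i0: "i0 < n" "\<And>j. j < n \<Longrightarrow> p1 n i0 \<le> p1 n j"
  proof -
    have fin: "finite (p1 n ` {..<n})" by simp
    have "0 \<in> {..<n}" using n2 by simp
    then have ne: "p1 n ` {..<n} \<noteq> {}" by blast
    obtain i0 where "i0 \<in> {..<n}" "p1 n i0 = Min (p1 n ` {..<n})"
      using Min_in[OF fin ne] by auto
    then show ?thesis using that[of i0] Min_le[OF fin] by auto
  qed
  have np1: "real n * p1 n i0 \<le> 1"
  proof -
    have "(\<Sum>j<n. p1 n i0) \<le> (\<Sum>j<n. p1 n j)" using i0 by (intro sum_mono) auto
    then show ?thesis using P1 by simp
  qed
  have each: "pO n * ka * inverse (real (Suc m)) \<le> p1 n i0 + p2 n (n - 1 - m)" if "m < Suc M" for m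
  proof -
    define k where "k = n - 2 - 2*m"
    have nk: "n = 2*m+k+2" using that n2 unfolding k_def M_def by simp
    have r: "m+1+k = n - 1 - m" using nk by simp
    have "pO n * (1 / (4 * 3^(p-2) * (real m + 1))) \<le> p1 n i0 + p2 n (m+1+k)"
      by (rule key[OF p SP pO0 nk i0(1)])
    then show ?thesis unfolding r ka_def by (simp add: field_simps)
  qed
  have "pO n * ka * harm (Suc M) = (\<Sum>m<Suc M. pO n * ka * inverse (real (Suc m)))"
    by (simp only: harm_altdef sum_distrib_left)
  also have "\<dots> \<le> (\<Sum>m<Suc M. p1 n i0 + p2 n (n - 1 - m))"
    by (intro sum_mono each) auto
  also have "\<dots> = real (Suc M) * p1 n i0 + (\<Sum>m<Suc M. p2 n (n - 1 - m))"
    by (simp add: sum.distrib)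
  also have "real (Suc M) * p1 n i0 \<le> 1"
  proof -
    have "Suc M \<le> n" using n2 unfolding M_def by simp
    then have "real (Suc M) * p1 n i0 \<le> real n * p1 n i0"
      using p10[OF i0(1)] by (intro mult_right_mono) auto
    then show ?thesis using np1 by simp
  qed
  also have "(\<Sum>m<Suc M. p2 n (n - 1 - m)) \<le> 1"
  proof -
    have inj: "inj_on (\<lambda>m. n - 1 - m) {..<Suc M}"
      using n2 unfolding M_def by (intro inj_onI) auto
    have "(\<Sum>m<Suc M. p2 n (n - 1 - m)) = (\<Sum>j\<in>(\<lambda>m. n - 1 - m) ` {..<Suc M}. p2 n j)"
      using sum.reindex[OF inj, of "p2 n"] by simp
    also have "\<dots> \<le> (\<Sum>j<n. p2 n j)"
      by (rule sum_mono2) (use n2 p20 in auto)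
    finally show ?thesis using P2 by simp
  qed
  finally show ?thesis unfolding M_def ka_def by simp
qed



lemma halfhalf:
  fixes pO :: "nat \<Rightarrow> real" and p1 p2 :: "nat \<Rightarrow> nat \<Rightarrow> real"
  assumes p: "2 < p" and K: "1 \<le> K" and n: "n = 2*K"
    and s1: "pO n + (\<Sum>j<n. p1 n j) + (\<Sum>j<n. p2 n j) = 1"
  shows "ereal (pO n + (1 - pO n) * 2 powr (1 - 1 / real p)) \<le> approx_ratio p pO p1 p2"
proof -
  have p2: "2 \<le> p" using p by simp
  define L :: "real list" where "L = replicate K 0 @ replicate K 1"
  define x where "x = prof L 0 0"
  have lenL: "length L = n" unfolding L_def n by simp
  have np: "0 < n" using n K by simp
  have sumx: "(\<Sum>j<n. f (x j)) = real K * f 0 + real K * f 1" for f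
  proof -
    have "(\<Sum>j<n. f (x j)) = sum_list (map f L)"
      unfolding x_def by (rule sum_prof) (use lenL np in auto)
    then show ?thesis by (simp add: L_def sum_list_replicate)
  qed
  have DDh: "DD p n x (1/2) = 0"
    unfolding DD_def using sumx[of "\<lambda>a. phi p (1/2 - a)"] phi_odd[of p "1/2"] by simp
  have O: "OPT p n x = 1/2" by (rule OPT_eq[OF p2 np DDh])
  have lp: "lp_obj p n x y = real K * \<bar>y\<bar>^p + real K * \<bar>1 - y\<bar>^p" for y
    unfolding lp_obj_def using sumx[of "\<lambda>a. \<bar>a - y\<bar>^p"] by (simp add: abs_minus_commute)
  define S0 where "S0 = sc_pt p n x (1/2)"
  define S1 where "S1 = root p (real K)"
  have p0: "0 < p" using p by simp
  have sc01: "sc_pt p n x a = S1" if "a = 0 \<or> a = 1" for a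
    using that p0 unfolding sc_pt_def S1_def lp by (auto simp: zero_power)
  have xin: "x j = 0 \<or> x j = 1" if "j < n" for j
  proof -
    have "x j = L ! j" unfolding x_def prof_def sig_def by simp
    moreover have "L ! j \<in> set L" using that lenL by simp
    ultimately show ?thesis unfolding L_def by (auto split: if_splits)
  qed
  have sortedL: "sorted L" unfolding L_def by (auto simp: sorted_append)
  have kin: "kth_largest n x j = 0 \<or> kth_largest n x j = 1" if "j < n" for j
  proof -
    have "kth_largest n x j = rev L ! j" unfolding x_def by (rule kth_prof) (use lenL np sortedL in auto)
    moreover have "rev L ! j \<in> set L" using that lenL by (metis length_rev nth_mem set_rev)
    ultimately show ?thesis unfolding L_def by (auto split: if_splits)
  qed
  have mech: "mech_exp p pO p1 p2 n x (sc_pt p n x) = pO n * S0 + (1 - pO n) * S1"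
  proof -
    have a: "(\<Sum>j<n. p1 n j * sc_pt p n x (x j)) = (\<Sum>j<n. p1 n j) * S1"
      unfolding sum_distrib_right by (intro sum.cong refl) (use sc01 xin in auto)
    have b: "(\<Sum>j<n. p2 n j * sc_pt p n x (kth_largest n x j)) = (\<Sum>j<n. p2 n j) * S1"
      unfolding sum_distrib_right by (intro sum.cong refl) (use sc01 kin in auto)
    have "(\<Sum>j<n. p1 n j) + (\<Sum>j<n. p2 n j) = 1 - pO n" using s1 by linarith
    then have e: "(\<Sum>j<n. p1 n j) * S1 + (\<Sum>j<n. p2 n j) * S1 = (1 - pO n) * S1"
      by (metis distrib_right)
    show ?thesis unfolding mech_exp_def O a b S0_def using e by (simp add: add.assoc)
  qed
  have lph: "lp_obj p n x (1/2) = 2 * real K * (1/2)^p" using lp[of "1/2"] by simp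
  have S0pos: "0 < S0" unfolding S0_def sc_pt_def lph using K p0 by simp
  have inf: "(INF y. sc_pt p n x y) = S0"
  proof -
    have low: "S0 \<le> sc_pt p n x y" for y
      unfolding S0_def sc_pt_def using OPT_min[OF p2 np, of x y] O p0
      by (simp add: real_root_le_mono)
    show ?thesis
    proof (rule antisym)
      show "(INF y. sc_pt p n x y) \<le> S0" unfolding S0_def
        by (rule cINF_lower) (use low in \<open>auto simp: bdd_below_def\<close>)
      show "S0 \<le> (INF y. sc_pt p n x y)" by (rule cINF_greatest) (use low in auto)
    qed
  qed
  have ratio: "S1 / S0 = 2 powr (1 - 1 / real p)"
  proof -
    have "S1 / S0 = root p (real K / (2 * real K * (1/2)^p))"
      unfolding S1_def S0_def sc_pt_def lph by (rule real_root_divide[symmetric])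
    also have "real K / (2 * real K * (1/2)^p) = 2^p / 2" using K by (simp add: field_simps)
    also have "root p (2^p / 2) = (2^p / 2) powr (1 / real p)" using p0 by (simp add: root_powr_inverse)
    also have "(2^p / 2 :: real) = 2 powr (real p - 1)"
      by (simp add: powr_diff powr_realpow)
    also have "(2 powr (real p - 1)) powr (1 / real p) = 2 powr (1 - 1 / real p)"
      using p0 by (simp add: powr_powr field_simps)
    finally show ?thesis .
  qed
  have r: "ratio (mech_exp p pO p1 p2 n x (sc_pt p n x)) (INF y. sc_pt p n x y)
      = ereal (pO n + (1 - pO n) * 2 powr (1 - 1 / real p))"
  proof -
    have "(pO n * S0 + (1 - pO n) * S1) / S0 = pO n + (1 - pO n) * (S1 / S0)"
      using S0pos by (simp add: field_simps)
    then show ?thesis unfolding ratio_def inf mech using S0pos ratio by simp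
  qed
  have mem: "(n, x) \<in> {(n, x). (n::nat) \<ge> 2}" using n K by simp
  show ?thesis unfolding approx_ratio_def
    using SUP_upper[OF mem, of "\<lambda>nx. ratio (mech_exp p pO p1 p2 (fst nx) (snd nx) (sc_pt p (fst nx) (snd nx)))
              (INF y. sc_pt p (fst nx) (snd nx) y)"] r by simp
qed



theorem mainTheorem6:
  fixes p :: nat and pO :: "nat \<Rightarrow> real" and p1 p2 :: "nat \<Rightarrow> nat \<Rightarrow> real"
  assumes "p > 2"
    and "\<And>n. n \<ge> 2 \<Longrightarrow> pO n \<ge> 0"
    and "\<And>n j. n \<ge> 2 \<Longrightarrow> j < n \<Longrightarrow> p1 n j \<ge> 0"
    and "\<And>n j. n \<ge> 2 \<Longrightarrow> j < n \<Longrightarrow> p2 n j \<ge> 0"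
    and "\<And>n. n \<ge> 2 \<Longrightarrow> pO n + (\<Sum>j<n. p1 n j) + (\<Sum>j<n. p2 n j) = 1"
    and "strategyproof p pO p1 p2"
  shows "approx_ratio p pO p1 p2 \<ge> ereal (2 powr (1 - 1 / real p))"
proof -
  note p = assms(1) and SP = assms(6)
  define c where "c = 2 powr (1 - 1 / real p)"
  have c1: "1 < c" unfolding c_def using p by (intro gr_one_powr) auto
  define ka :: real where "ka = 1 / (4 * 3^(p-2))"
  have kapos: "0 < ka" unfolding ka_def by simp
  show ?thesis unfolding c_def[symmetric]
  proof (rule ereal_le_epsilon2)
    fix e :: real assume e: "0 < e"
    define B where "B = 2 * (c - 1) / (ka * e)"
    define K where "K = nat \<lceil>exp B\<rceil> + 1"
    define n where "n = 2 * K"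
    have K1: "1 \<le> K" unfolding K_def by simp
    have n2: "2 \<le> n" unfolding n_def using K1 by simp
    have "exp B \<le> real K + 1"
    proof -
      have "exp B \<le> real (nat \<lceil>exp B\<rceil>)" by (rule real_nat_ceiling_ge)
      moreover have "real K = real (nat \<lceil>exp B\<rceil>) + 1" unfolding K_def by simp
      ultimately show ?thesis by linarith
    qed
    then have BK: "B \<le> ln (real K + 1)"
      using ln_le_cancel_iff[of "exp B" "real K + 1"] by simp
    have hK: "B \<le> harm K" using BK ln_le_harm[of K] by simp
    have div: "Suc ((n - 2) div 2) = K" unfolding n_def using K1 by simp
    have pO0: "0 \<le> pO n" using assms(2) n2 by simp
    have bound: "pO n * ka * harm K \<le> 2"
      using pO_bound[OF p SP n2 pO0 assms(3)[OF n2] assms(4)[OF n2] assms(5)[OF n2]]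
      unfolding div ka_def by simp
    have "pO n * ka * B \<le> pO n * ka * harm K"
      using hK pO0 kapos by (intro mult_left_mono) auto
    then have "pO n * ka * B \<le> 2" using bound by simp
    moreover have "pO n * ka * B = pO n * (c - 1) * 2 / e"
      unfolding B_def using kapos e by (simp add: field_simps)
    ultimately have "pO n * (c - 1) * 2 / e \<le> 2" by linarith
    then have "pO n * (c - 1) * 2 \<le> 2 * e" using e by (simp add: divide_le_eq)
    then have pe: "pO n * (c - 1) \<le> e" by linarith
    have hh: "ereal (pO n + (1 - pO n) * c) \<le> approx_ratio p pO p1 p2"
      unfolding c_def by (rule halfhalf[where pO=pO and ?p1.0=p1 and ?p2.0=p2 and n=n, OF p K1 n_def assms(5)[OF n2]])
    have "c \<le> pO n + (1 - pO n) * c + e" using pe by (simp add: algebra_simps)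
    then have "ereal c \<le> ereal (pO n + (1 - pO n) * c) + ereal e" by simp
    also have "\<dots> \<le> approx_ratio p pO p1 p2 + ereal e" using hh by (rule add_right_mono)
    finally show "ereal c \<le> approx_ratio p pO p1 p2 + ereal e" .
  qed
qed

end
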